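(* Assume the setting of the context. Let $\delta>0$, let $\alpha$ be a finite measurable partition of $\Theta$ with $\operatorname{diam}(\alpha)<\delta$, and let $\beta$ be a partition of $\mathcal{X}$ according to central words with $\operatorname{diam}(\beta)<\delta$. Then for every Borel probability measure $\eta$ on $\Theta\times\mathcal{X}$, every $y\in\mathcal{Y}$, and every $n\ge1$, \[ \int g_n(\theta,x,y)\,d\eta(\theta,x)-KL(\eta:P_0\mid\alpha\times\beta_n)\le\log\Bigl[\int\exp(g_n(\theta,x,y))\,dP_0(\theta,x)\Bigr]+\sum_{k=0}^{n-1}\rho_\delta(T^ky). \]
   Context: Observed system: $\mathcal{Y}$ is a complete separable metric space, $T$ is Borel, and $\nu$ is a $T$-invariant ergodic probability measure. Model system: $\mathcal{X}\subset\mathcal{A}^{\mathbb{Z}}$ is a mixing shift of finite type, with left shift $(Sx)_i=x_{i+1}$ and metric $d_{\mathcal{X}}(x,y)=2^{-\inf\{|m|:x_m\ne y_m\}}$. $\Theta$ is a compact metric space with metric $d_\Theta$, and $\{\mu_\theta\}$ is the family of Gibbs measures of a regular (Hölder-norm-continuous) family of Hölder potentials $f_\theta$. Loss: $\ell:\Theta\times\mathcal{X}\times\mathcal{Y}\to\mathbb{R}$ is continuous, with $\sup_{\theta,x}|\ell(\theta,x,y)|\le\ell^*(y)$ for a $\nu$-integrable $\ell^*$. For each $\delta>0$, $\rho_\delta:\mathcal{Y}\to(0,\infty)$ is a measurable function with $|\ell(\theta,x,y)-\ell(\theta',x',y)|\le\rho_\delta(y)$ whenever $\max(d_\Theta(\theta,\theta'),d_{\mathcal{X}}(x,x'))\le\delta$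 (and $\int\rho_\delta d\nu\to0$ as $\delta\to0^+$). Set $g=-\ell$ and $g_n(\theta,x,y)=-\sum_{k=0}^{n-1}\ell(\theta,S^kx,T^ky)$. Prior: $\pi_0$ is a fully supported probability on $\Theta$, and $P_0(E)=\int\int\mathbf{1}_E\,d\mu_\theta\,d\pi_0$. Partitions: a partition of $\mathcal{X}$ according to central words is one of the form $\{[x_{-m}^m]:x\in\mathcal{X}\}$ for some $m\ge0$, where $[x_{-m}^m]=\{z:z_i=x_i,|i|\le m\}$. Also $\beta_n=\bigvee_{k<n}S^{-k}\beta$ and $\alpha\times\beta_n=\{A\times B\}$. Divergence: $KL(\eta:\gamma\mid\xi)=\sum_{C\in\xi}\eta(C)\log(\eta(C)/\gamma(C))$ if $\gamma(C)=0\Rightarrow\eta(C)=0$ on $\xi$, and $+\infty$ otherwise, with $0\log(0/x)=0$. *)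

theory Defs
  imports "HOL-Probability.Probability"
begin

definition shift :: "(int \<Rightarrow> 'a) \<Rightarrow> (int \<Rightarrow> 'a)" where
  "shift x = (\<lambda>i. x (i + 1))"

definition dX :: "(int \<Rightarrow> 'a) \<Rightarrow> (int \<Rightarrow> 'a) \<Rightarrow> real" where
  "dX x y = (if x = y then 0
             else (1/2) ^ (LEAST k. \<exists>m. x m \<noteq> y m \<and> nat \<bar>m\<bar> = k))"

definition diamX :: "(int \<Rightarrow> 'a) set \<Rightarrow> real" where
  "diamX B = (if B = {} then 0 else (SUP p\<in>B \<times> B. dX (fst p) (snd p)))"

definition is_SFT :: "(int \<Rightarrow> 'a) set \<Rightarrow> bool" where
  "is_SFT X \<longleftrightarrow> (\<exists>F :: 'a list set. finite F \<and>
      X = {x. \<forall>w\<in>F. \<forall>i. \<not> (\<forall>j<length w. x (i + int j) = w ! j)})"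

definition openX :: "(int \<Rightarrow> 'a) set \<Rightarrow> (int \<Rightarrow> 'a) set \<Rightarrow> bool" where
  "openX X U \<longleftrightarrow> U \<subseteq> X \<and> (\<forall>x\<in>U. \<exists>e>0. \<forall>z\<in>X. dX x z < e \<longrightarrow> z \<in> U)"

definition top_mixing :: "(int \<Rightarrow> 'a) set \<Rightarrow> bool" where
  "top_mixing X \<longleftrightarrow> (\<forall>U V. openX X U \<and> openX X V \<and> U \<noteq> {} \<and> V \<noteq> {} \<longrightarrow>
      (\<exists>N. \<forall>n\<ge>N. {x\<in>U. (shift ^^ n) x \<in> V} \<noteq> {}))"

definition mixing_SFT :: "(int \<Rightarrow> 'a) set \<Rightarrow> bool" where
  "mixing_SFT X \<longleftrightarrow> is_SFT X \<and> X \<noteq> {} \<and> top_mixing X"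

text \<open>Measurable space on X: the (Borel = product) sigma-algebra, restricted to X.\<close>
definition MX :: "(int \<Rightarrow> 'a) set \<Rightarrow> (int \<Rightarrow> 'a) measure" where
  "MX X = restrict_space (PiM UNIV (\<lambda>_. count_space UNIV)) X"

definition cyl0 :: "(int \<Rightarrow> 'a) set \<Rightarrow> (int \<Rightarrow> 'a) \<Rightarrow> nat \<Rightarrow> (int \<Rightarrow> 'a) set" where
  "cyl0 X x n = {z\<in>X. \<forall>i. 0 \<le> i \<and> i < int n \<longrightarrow> z i = x i}"

definition cylC :: "(int \<Rightarrow> 'a) set \<Rightarrow> (int \<Rightarrow> 'a) \<Rightarrow> nat \<Rightarrow> (int \<Rightarrow> 'a) set" where
  "cylC X x m = {z\<in>X. \<forall>i. \<bar>i\<bar> \<le> int m \<longrightarrow> z i = x i}"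

definition central_partition :: "(int \<Rightarrow> 'a) set \<Rightarrow> nat \<Rightarrow> (int \<Rightarrow> 'a) set set" where
  "central_partition X m = {cylC X x m | x. x \<in> X}"

definition is_central_word_partition :: "(int \<Rightarrow> 'a) set \<Rightarrow> (int \<Rightarrow> 'a) set set \<Rightarrow> bool" where
  "is_central_word_partition X \<beta> \<longleftrightarrow> (\<exists>m. \<beta> = central_partition X m)"

definition join_partition :: "(int \<Rightarrow> 'a) set \<Rightarrow> (int \<Rightarrow> 'a) set set \<Rightarrow> nat \<Rightarrow> (int \<Rightarrow> 'a) set set" where
  "join_partition X \<beta> n = {C. C \<noteq> {} \<and> (\<exists>B. (\<forall>k<n. B k \<in> \<beta>) \<and>
       C = {x\<in>X. \<forall>k<n. (shift ^^ k) x \<in> B k})}"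

definition prod_partition :: "'t set set \<Rightarrow> 'x set set \<Rightarrow> ('t \<times> 'x) set set" where
  "prod_partition \<alpha> \<beta> = {A \<times> B | A B. A \<in> \<alpha> \<and> B \<in> \<beta>}"

definition finite_measurable_partition :: "'b measure \<Rightarrow> 'b set set \<Rightarrow> bool" where
  "finite_measurable_partition M P \<longleftrightarrow> finite P \<and> {} \<notin> P \<and> disjoint P \<and>
       \<Union>P = space M \<and> P \<subseteq> sets M"

definition holder :: "(int \<Rightarrow> 'a) set \<Rightarrow> real \<Rightarrow> ((int \<Rightarrow> 'a) \<Rightarrow> real) \<Rightarrow> bool" where
  "holder X a f \<longleftrightarrow> (\<exists>c. \<forall>x\<in>X. \<forall>y\<in>X. \<bar>f x - f y\<bar> \<le> c * dX x y powr a)"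

definition holder_norm :: "(int \<Rightarrow> 'a) set \<Rightarrow> real \<Rightarrow> ((int \<Rightarrow> 'a) \<Rightarrow> real) \<Rightarrow> real" where
  "holder_norm X a f = (SUP x\<in>X. \<bar>f x\<bar>) +
     (SUP p\<in>{(x,y). x \<in> X \<and> y \<in> X \<and> x \<noteq> y}. \<bar>f (fst p) - f (snd p)\<bar> / dX (fst p) (snd p) powr a)"

definition regular_family :: "'t::metric_space set \<Rightarrow> (int \<Rightarrow> 'a) set \<Rightarrow> ('t \<Rightarrow> (int \<Rightarrow> 'a) \<Rightarrow> real) \<Rightarrow> bool" where
  "regular_family Th X f \<longleftrightarrow> (\<exists>a>0. (\<forall>\<theta>\<in>Th. holder X a (f \<theta>)) \<and>
     (\<forall>\<theta>\<in>Th. \<forall>\<epsilon>>0. \<exists>d>0. \<forall>\<theta>'\<in>Th. dist \<theta> \<theta>' < d \<longrightarrow>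
         holder_norm X a (\<lambda>x. f \<theta> x - f \<theta>' x) < \<epsilon>))"

definition gibbs_measure :: "(int \<Rightarrow> 'a) set \<Rightarrow> ((int \<Rightarrow> 'a) \<Rightarrow> real) \<Rightarrow> (int \<Rightarrow> 'a) measure \<Rightarrow> bool" where
  "gibbs_measure X f \<mu> \<longleftrightarrow> prob_space \<mu> \<and> sets \<mu> = sets (MX X) \<and>
     (\<forall>E\<in>sets (MX X). emeasure \<mu> {x\<in>X. shift x \<in> E} = emeasure \<mu> E) \<and>
     (\<exists>P C. C \<ge> 1 \<and> (\<forall>x\<in>X. \<forall>n\<ge>1.
        exp (- real n * P + (\<Sum>k<n. f ((shift ^^ k) x))) / C \<le> measure \<mu> (cyl0 X x n) \<and>
        measure \<mu> (cyl0 X x n) \<le> C * exp (- real n * P + (\<Sum>k<n. f ((shift ^^ k) x)))))"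

definition MT :: "'t::metric_space set \<Rightarrow> 't measure" where
  "MT Th = restrict_space borel Th"

definition P0 :: "'t::metric_space set \<Rightarrow> (int \<Rightarrow> 'a) set \<Rightarrow> 't measure \<Rightarrow> ('t \<Rightarrow> (int \<Rightarrow> 'a) measure)
     \<Rightarrow> ('t \<times> (int \<Rightarrow> 'a)) measure" where
  "P0 Th X \<pi>0 \<mu> = measure_of (space (MT Th \<Otimes>\<^sub>M MX X)) (sets (MT Th \<Otimes>\<^sub>M MX X))
      (\<lambda>E. \<integral>\<^sup>+ \<theta>. (\<integral>\<^sup>+ x. indicator E (\<theta>, x) \<partial>\<mu> \<theta>) \<partial>\<pi>0)"

definition KL :: "'b measure \<Rightarrow> 'b measure \<Rightarrow> 'b set set \<Rightarrow> ereal" where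
  "KL \<eta> \<gamma> \<xi> = (if (\<forall>C\<in>\<xi>. measure \<gamma> C = 0 \<longrightarrow> measure \<eta> C = 0)
     then ereal (\<Sum>C\<in>\<xi>. if measure \<eta> C = 0 then 0
                        else measure \<eta> C * ln (measure \<eta> C / measure \<gamma> C))
     else \<infinity>)"

definition gn :: "('t \<Rightarrow> (int \<Rightarrow> 'a) \<Rightarrow> 'y \<Rightarrow> real) \<Rightarrow> ('y \<Rightarrow> 'y) \<Rightarrow> nat \<Rightarrow> 't \<Rightarrow> (int \<Rightarrow> 'a) \<Rightarrow> 'y \<Rightarrow> real" where
  "gn loss T n \<theta> x y = - (\<Sum>k<n. loss \<theta> ((shift ^^ k) x) ((T ^^ k) y))"

definition ergodic_invariant :: "'y measure \<Rightarrow> ('y \<Rightarrow> 'y) \<Rightarrow> bool" where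
  "ergodic_invariant \<nu> T \<longleftrightarrow>
     (\<forall>A\<in>sets \<nu>. emeasure \<nu> (T -` A \<inter> space \<nu>) = emeasure \<nu> A) \<and>
     (\<forall>A\<in>sets \<nu>. T -` A \<inter> space \<nu> = A \<longrightarrow> measure \<nu> A = 0 \<or> measure \<nu> A = 1)"

end

theory Submission
  imports Defs
begin

lemma P0_sets:
  "sets (P0 Th X \<pi>0 \<mu>) = sets (MT Th \<Otimes>\<^sub>M MX X)"
  "space (P0 Th X \<pi>0 \<mu>) = space (MT Th \<Otimes>\<^sub>M MX X)"
proof -
  interpret sigma_algebra "space (MT Th \<Otimes>\<^sub>M MX X)" "sets (MT Th \<Otimes>\<^sub>M MX X)"
    by (rule sets.sigma_algebra_axioms)
  show "sets (P0 Th X \<pi>0 \<mu>) = sets (MT Th \<Otimes>\<^sub>M MX X)"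
       "space (P0 Th X \<pi>0 \<mu>) = space (MT Th \<Otimes>\<^sub>M MX X)"
    unfolding P0_def by simp_all
qed

lemma P0_le1:
  assumes "prob_space \<pi>0" "sets \<pi>0 = sets (MT Th)"
    "\<forall>\<theta>\<in>Th. prob_space (\<mu> \<theta>) \<and> sets (\<mu> \<theta>) = sets (MX X)"
  shows "emeasure (P0 Th X \<pi>0 \<mu>) (space (P0 Th X \<pi>0 \<mu>)) \<le> 1"
proof -
  let ?M = "MT Th \<Otimes>\<^sub>M MX X"
  let ?f = "\<lambda>E. \<integral>\<^sup>+ \<theta>. (\<integral>\<^sup>+ x. indicator E (\<theta>, x) \<partial>\<mu> \<theta>) \<partial>\<pi>0"
  interpret sigma_algebra "space ?M" "sets ?M"
    by (rule sets.sigma_algebra_axioms)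
  have sp: "space \<pi>0 = Th"
    using sets_eq_imp_space_eq[OF assms(2)] by (simp add: MT_def space_restrict_space)
  have "?f (space ?M) \<le> (\<integral>\<^sup>+ \<theta>. 1 \<partial>\<pi>0)"
  proof (rule nn_integral_mono)
    fix \<theta> assume "\<theta> \<in> space \<pi>0"
    then have pr: "prob_space (\<mu> \<theta>)" using assms(3) sp by auto
    have "(\<integral>\<^sup>+ x. indicator (space ?M) (\<theta>, x) \<partial>\<mu> \<theta>) \<le> (\<integral>\<^sup>+ x. 1 \<partial>\<mu> \<theta>)"
      by (rule nn_integral_mono) (auto simp: indicator_def)
    also have "\<dots> = 1" using pr by (simp add: prob_space.emeasure_space_1)
    finally show "(\<integral>\<^sup>+ x. indicator (space ?M) (\<theta>, x) \<partial>\<mu> \<theta>) \<le> 1" .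
  qed
  also have "\<dots> = 1" using assms(1) by (simp add: prob_space.emeasure_space_1)
  finally have "?f (space ?M) \<le> 1" .
  then show ?thesis
    unfolding P0_def by (simp add: emeasure_measure_of_conv)
qed

lemma DV_finite:
  fixes e g a :: "'c \<Rightarrow> real"
  assumes fin: "finite I" and e: "\<forall>C\<in>I. e C > 0" and g: "\<forall>C\<in>I. g C > 0"
    and s: "sum e I = 1"
  shows "(\<Sum>C\<in>I. e C * a C) - (\<Sum>C\<in>I. e C * ln (e C / g C)) \<le> ln (\<Sum>C\<in>I. g C * exp (a C))"
proof -
  have ne: "I \<noteq> {}" using s by auto
  define Z where "Z = (\<Sum>C\<in>I. g C * exp (a C))"
  have Zpos: "Z > 0" unfolding Z_def
    using fin ne g by (intro sum_pos) auto
  have step: "e C * a C - e C * ln (e C / g C) - e C * ln Z \<le> g C * exp (a C) / Z - e C"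
    if "C \<in> I" for C
  proof -
    have ec: "e C > 0" and gc: "g C > 0" using e g that by auto
    have "e C * a C - e C * ln (e C / g C) - e C * ln Z = e C * ln (g C * exp (a C) / (e C * Z))"
      using ec gc Zpos by (simp add: ln_div ln_mult algebra_simps)
    also have "\<dots> \<le> e C * (g C * exp (a C) / (e C * Z) - 1)"
      using ec gc Zpos by (intro mult_left_mono ln_le_minus_one) auto
    also have "\<dots> = g C * exp (a C) / Z - e C"
      using ec Zpos by (simp add: field_simps)
    finally show ?thesis .
  qed
  have "(\<Sum>C\<in>I. e C * a C - e C * ln (e C / g C) - e C * ln Z) \<le> (\<Sum>C\<in>I. g C * exp (a C) / Z - e C)"
    using step by (intro sum_mono) auto
  also have "\<dots> = 0"
    using Zpos s by (simp add: sum_subtractf sum_divide_distrib[symmetric] Z_def)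
  finally have "(\<Sum>C\<in>I. e C * a C) - (\<Sum>C\<in>I. e C * ln (e C / g C)) - (\<Sum>C\<in>I. e C) * ln Z \<le> 0"
    by (simp add: sum_subtractf sum_distrib_right)
  then show ?thesis using s Z_def by simp
qed

lemma indicator_sum_single:
  fixes v :: "'b set \<Rightarrow> real"
  assumes "finite \<xi>" "disjoint \<xi>" "C0 \<in> \<xi>" "p \<in> C0"
  shows "(\<Sum>C\<in>\<xi>. indicator C p * v C) = v C0"
proof -
  have "(\<Sum>C\<in>\<xi>. indicator C p * v C) = indicator C0 p * v C0 + (\<Sum>C\<in>\<xi>-{C0}. indicator C p * v C)"
    by (rule sum.remove[OF assms(1) assms(3)])
  also have "(\<Sum>C\<in>\<xi>-{C0}. indicator C p * v C) = 0"
  proof (rule sum.neutral, rule ballI)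
    fix C assume "C \<in> \<xi> - {C0}"
    then have "p \<notin> C" using assms(2-4) unfolding disjoint_def disjnt_def by blast
    then show "indicator C p * v C = 0" by simp
  qed
  finally show ?thesis using assms by simp
qed

lemma step_fun_integral:
  fixes v :: "'b set \<Rightarrow> real"
  assumes "finite_measure M" "finite \<xi>" "\<xi> \<subseteq> sets M"
  shows "integrable M (\<lambda>p. \<Sum>C\<in>\<xi>. indicator C p * v C)"
    "(\<integral>p. (\<Sum>C\<in>\<xi>. indicator C p * v C) \<partial>M) = (\<Sum>C\<in>\<xi>. measure M C * v C)"
proof -
  have ii: "integrable M (\<lambda>p. indicator C p * v C)" if "C \<in> \<xi>" for C
    using assms that finite_measure.emeasure_finite[OF assms(1)]
    by (intro integrable_mult_left integrable_real_indicator)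
      (auto simp: less_top[symmetric])
  show "integrable M (\<lambda>p. \<Sum>C\<in>\<xi>. indicator C p * v C)"
    using ii by (rule Bochner_Integration.integrable_sum[where f="\<lambda>C p. indicator C p * v C"])
  have "(\<integral>p. (\<Sum>C\<in>\<xi>. indicator C p * v C) \<partial>M) = (\<Sum>C\<in>\<xi>. \<integral>p. indicator C p * v C \<partial>M)"
    using ii by (rule Bochner_Integration.integral_sum[where f="\<lambda>C p. indicator C p * v C"])
  also have "\<dots> = (\<Sum>C\<in>\<xi>. measure M C * v C)"
  proof (rule sum.cong)
    fix C assume "C \<in> \<xi>"
    then have "C \<inter> space M = C" using assms sets.sets_into_space by blast
    then show "(\<integral>p. indicator C p * v C \<partial>M) = measure M C * v C"
      by simp
  qed simp
  finally show "(\<integral>p. (\<Sum>C\<in>\<xi>. indicator C p * v C) \<partial>M) = (\<Sum>C\<in>\<xi>. measure M C * v C)" .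
qed

lemma sum_measure_partition:
  assumes "finite_measure M" "finite \<xi>" "\<xi> \<subseteq> sets M" "disjoint \<xi>" "\<Union>\<xi> = space M"
  shows "(\<Sum>C\<in>\<xi>. measure M C) = measure M (space M)"
proof -
  have "measure M (\<Union>C\<in>\<xi>. id C) = (\<Sum>C\<in>\<xi>. measure M (id C))"
    using assms by (intro measure_finite_Union)
      (auto simp: disjoint_family_on_def disjoint_def disjnt_def finite_measure.emeasure_finite)
  then show ?thesis using assms(5) by simp
qed

lemma main_abstract:
  fixes h :: "'b \<Rightarrow> real"
  assumes eta: "prob_space \<eta>" and gs: "sets \<gamma> = sets \<eta>" and g1: "emeasure \<gamma> (space \<gamma>) \<le> 1"
    and fin: "finite \<xi>" and dis: "disjoint \<xi>" and cov: "\<Union>\<xi> = space \<eta>" and meas: "\<xi> \<subseteq> sets \<eta>"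
    and osc: "\<forall>C\<in>\<xi>. \<forall>p\<in>C. \<forall>q\<in>C. h p \<le> h q + R" and R: "R \<ge> 0"
    and bnd: "\<forall>p\<in>space \<eta>. \<bar>h p\<bar> \<le> B"
  shows "ereal (\<integral>p. h p \<partial>\<eta>) - KL \<eta> \<gamma> \<xi> \<le> ereal (ln (\<integral>p. exp (h p) \<partial>\<gamma>) + R)"
proof (cases "\<forall>C\<in>\<xi>. measure \<gamma> C = 0 \<longrightarrow> measure \<eta> C = 0")
  case False
  then have "KL \<eta> \<gamma> \<xi> = \<infinity>" unfolding KL_def by auto
  then show ?thesis by simp
next
  case True
  have sp: "space \<gamma> = space \<eta>" using gs by (rule sets_eq_imp_space_eq)
  have fmg: "finite_measure \<gamma>" using g1 by (intro finite_measureI) (auto simp: top_unique)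
  have fme: "finite_measure \<eta>" using eta unfolding prob_space_def by blast
  have measg: "\<xi> \<subseteq> sets \<gamma>" using meas gs by simp
  have se: "(\<Sum>C\<in>\<xi>. measure \<eta> C) = 1"
    using sum_measure_partition[OF fme fin meas dis cov] eta by (simp add: prob_space.prob_space)
  have sg: "(\<Sum>C\<in>\<xi>. measure \<gamma> C) \<le> 1"
  proof -
    have "(\<Sum>C\<in>\<xi>. measure \<gamma> C) = measure \<gamma> (space \<gamma>)"
      using sum_measure_partition[OF fmg fin measg dis] cov sp by simp
    also have "\<dots> \<le> 1" using g1 fmg
      by (simp add: finite_measure.emeasure_eq_measure)
    finally show ?thesis .
  qed
  define I where "I = {C\<in>\<xi>. measure \<eta> C \<noteq> 0}"
  have finI: "finite I" using fin I_def by simp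
  have Ie: "\<forall>C\<in>I. measure \<eta> C > 0" unfolding I_def
    using measure_nonneg[of \<eta>] by (auto simp: less_le)
  have Ig: "\<forall>C\<in>I. measure \<gamma> C > 0" unfolding I_def
    using True measure_nonneg[of \<gamma>] by (auto simp: less_le)
  have sI: "(\<Sum>C\<in>I. measure \<eta> C * v C) = (\<Sum>C\<in>\<xi>. measure \<eta> C * v C)" for v
    unfolding I_def by (rule sum.mono_neutral_left) (use fin in auto)
  have seI: "sum (measure \<eta>) I = 1"
    using sI[of "\<lambda>_. 1"] se by simp
  define KLs where "KLs = (\<Sum>C\<in>I. measure \<eta> C * ln (measure \<eta> C / measure \<gamma> C))"
  have KLeq: "KL \<eta> \<gamma> \<xi> = ereal KLs"
  proof -
    have "(\<Sum>C\<in>\<xi>. if measure \<eta> C = 0 then 0 else measure \<eta> C * ln (measure \<eta> C / measure \<gamma> C))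
        = (\<Sum>C\<in>\<xi>. if measure \<eta> C \<noteq> 0 then measure \<eta> C * ln (measure \<eta> C / measure \<gamma> C) else 0)"
      by (rule sum.cong) auto
    also have "\<dots> = KLs" unfolding KLs_def I_def by (rule sum.inter_filter[symmetric]) (rule fin)
    finally show ?thesis using True by (simp add: KL_def)
  qed
  show ?thesis
  proof (cases "h \<in> borel_measurable \<eta>")
    case False
    have ni: "\<not> integrable \<eta> h" using False borel_measurable_integrable by blast
    have ni2: "\<not> integrable \<gamma> (\<lambda>p. exp (h p))"
    proof
      assume "integrable \<gamma> (\<lambda>p. exp (h p))"
      then have "(\<lambda>p. exp (h p)) \<in> borel_measurable \<gamma>" by (rule borel_measurable_integrable)
      then have "(\<lambda>p. ln (exp (h p))) \<in> borel_measurable \<gamma>" by (rule borel_measurable_ln)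
      then have "h \<in> borel_measurable \<gamma>" by simp
      then have "h \<in> borel_measurable \<eta>" using measurable_cong_sets[OF gs refl, of borel] by blast
      then show False using False by simp
    qed
    have "(\<Sum>C\<in>I. measure \<eta> C * 0) - KLs \<le> ln (\<Sum>C\<in>I. measure \<gamma> C * exp 0)"
      unfolding KLs_def by (rule DV_finite[OF finI Ie Ig seI])
    also have "\<dots> \<le> ln 1"
    proof -
      have "(\<Sum>C\<in>I. measure \<gamma> C) \<le> (\<Sum>C\<in>\<xi>. measure \<gamma> C)"
        unfolding I_def by (rule sum_mono2) (use fin in auto)
      moreover have "(\<Sum>C\<in>I. measure \<gamma> C) > 0"
        using seI Ig finI by (intro sum_pos) auto
      ultimately show ?thesis using sg by simp
    qed
    finally have "- KLs \<le> R" using R by simp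
    then show ?thesis
      using ni ni2 KLeq by (simp add: not_integrable_integral_eq)
  next
    case True
    define a where "a C = Sup (h ` C)" for C
    have a_up: "h q \<le> a C" and a_lo: "a C \<le> h q + R" if "C \<in> \<xi>" "q \<in> C" for C q
    proof -
      have "bdd_above (h ` C)" using osc that by (intro bdd_aboveI2[where M="h q + R"]) auto
      then show "h q \<le> a C" unfolding a_def using that by (intro cSUP_upper) auto
      show "a C \<le> h q + R" unfolding a_def using that osc by (intro cSUP_least) auto
    qed
    have inth: "integrable \<eta> h"
      using True bnd fme by (intro finite_measure.integrable_const_bound[where B=B]) auto
    have hg: "h \<in> borel_measurable \<gamma>"
      using True measurable_cong_sets[OF gs refl, of borel] by blast
    have meg: "(\<lambda>p. exp (h p)) \<in> borel_measurable \<gamma>"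
      using measurable_compose[OF hg borel_measurable_exp] by (simp add: o_def)
    have inteh: "integrable \<gamma> (\<lambda>p. exp (h p))"
    proof (rule finite_measure.integrable_const_bound[where B="exp B", OF fmg _ meg])
      show "AE x in \<gamma>. norm (exp (h x)) \<le> exp B"
        using bnd sp by (intro AE_I2) (auto simp: abs_le_iff)
    qed
    have pt: "\<exists>C0\<in>\<xi>. p \<in> C0" if "p \<in> space \<eta>" for p using cov that by auto
    have "(\<integral>p. h p \<partial>\<eta>) \<le> (\<integral>p. (\<Sum>C\<in>\<xi>. indicator C p * a C) \<partial>\<eta>)"
    proof (rule integral_mono[OF inth step_fun_integral(1)[OF fme fin meas]])
      fix p assume "p \<in> space \<eta>"
      then obtain C0 where "C0 \<in> \<xi>" "p \<in> C0" using pt by blast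
      then show "h p \<le> (\<Sum>C\<in>\<xi>. indicator C p * a C)"
        using indicator_sum_single[OF fin dis] a_up by simp
    qed
    also have "\<dots> = (\<Sum>C\<in>\<xi>. measure \<eta> C * a C)" by (rule step_fun_integral(2)[OF fme fin meas])
    also have "\<dots> = (\<Sum>C\<in>I. measure \<eta> C * a C)" by (rule sI[symmetric])
    finally have L: "(\<integral>p. h p \<partial>\<eta>) \<le> (\<Sum>C\<in>I. measure \<eta> C * a C)" .
    define J where "J = (\<integral>p. exp (h p) \<partial>\<gamma>)"
    have "(\<Sum>C\<in>\<xi>. measure \<gamma> C * exp (a C - R)) = (\<integral>p. (\<Sum>C\<in>\<xi>. indicator C p * exp (a C - R)) \<partial>\<gamma>)"
      by (rule step_fun_integral(2)[OF fmg fin measg, symmetric])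
    also have "\<dots> \<le> J" unfolding J_def
    proof (rule integral_mono[OF step_fun_integral(1)[OF fmg fin measg] inteh])
      fix p assume "p \<in> space \<gamma>"
      then obtain C0 where "C0 \<in> \<xi>" "p \<in> C0" using pt sp by blast
      moreover have "a C0 - R \<le> h p" using a_lo[OF \<open>C0 \<in> \<xi>\<close> \<open>p \<in> C0\<close>] by linarith
      ultimately show "(\<Sum>C\<in>\<xi>. indicator C p * exp (a C - R)) \<le> exp (h p)"
        using indicator_sum_single[OF fin dis] by simp
    qed
    finally have J1: "(\<Sum>C\<in>\<xi>. measure \<gamma> C * exp (a C - R)) \<le> J" .
    define Z where "Z = (\<Sum>C\<in>I. measure \<gamma> C * exp (a C))"
    have Zpos: "Z > 0" unfolding Z_def using seI Ig finI by (intro sum_pos) auto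
    have "Z * exp (- R) = (\<Sum>C\<in>I. measure \<gamma> C * exp (a C - R))"
      unfolding Z_def sum_distrib_right by (rule sum.cong) (auto simp: exp_diff exp_minus divide_inverse)
    also have "\<dots> \<le> (\<Sum>C\<in>\<xi>. measure \<gamma> C * exp (a C - R))"
      unfolding I_def by (rule sum_mono2) (use fin in auto)
    also have "\<dots> \<le> J" by (rule J1)
    finally have ZJ: "Z * exp (- R) \<le> J" .
    have Zp2: "0 < Z * exp (- R)" using Zpos by simp
    then have Jpos: "J > 0" using ZJ by linarith
    have "ln Z = ln (Z * exp (- R)) + R" using Zpos by (simp add: ln_mult)
    also have "\<dots> \<le> ln J + R" using ZJ Zp2 Jpos ln_le_cancel_iff by simp
    finally have lnZ: "ln Z \<le> ln J + R" .
    have "(\<Sum>C\<in>I. measure \<eta> C * a C) - KLs \<le> ln Z"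
      unfolding KLs_def Z_def by (rule DV_finite[OF finI Ie Ig seI])
    then have "(\<integral>p. h p \<partial>\<eta>) - KLs \<le> ln J + R" using L lnZ by linarith
    then show ?thesis using KLeq J_def by simp
  qed
qed

lemma shift_pow: "(shift ^^ k) x = (\<lambda>i. x (i + int k))"
  by (induction k arbitrary: x) (auto simp: shift_def algebra_simps)

lemma SFT_shift:
  assumes "is_SFT X" "x \<in> X" shows "shift x \<in> X"
proof -
  obtain F :: "'a list set" where F: "X = {x. \<forall>w\<in>F. \<forall>i. \<not> (\<forall>j<length w. x (i + int j) = w ! j)}"
    using assms(1) unfolding is_SFT_def by blast
  show ?thesis
  proof -
    have "\<forall>w\<in>F. \<forall>i. \<not> (\<forall>j<length w. shift x (i + int j) = w ! j)"
    proof (intro ballI allI)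
      fix w i assume "w \<in> F"
      then have "\<not> (\<forall>j<length w. x ((i + 1) + int j) = w ! j)" using assms(2) F by blast
      then show "\<not> (\<forall>j<length w. shift x (i + int j) = w ! j)" by (simp add: shift_def algebra_simps)
    qed
    then show ?thesis using F by blast
  qed
qed

lemma SFT_shift_pow:
  assumes "is_SFT X" "x \<in> X" shows "(shift ^^ k) x \<in> X"
  by (induction k) (use assms SFT_shift in auto)

lemma cylC_sub: "cylC X x m \<subseteq> X" by (auto simp: cylC_def)

lemma cylC_self: "x \<in> X \<Longrightarrow> x \<in> cylC X x m" by (auto simp: cylC_def)

lemma cylC_eq: "z \<in> cylC X x m \<Longrightarrow> cylC X z m = cylC X x m"
  by (auto simp: cylC_def)

lemma central_partition_finite:
  fixes X :: "(int \<Rightarrow> 'a::finite) set"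
  shows "finite (central_partition X m)"
proof -
  let ?J = "{- int m..int m}"
  have "central_partition X m \<subseteq> (\<lambda>r. {z\<in>X. \<forall>i. \<bar>i\<bar> \<le> int m \<longrightarrow> z i = r i}) ` (\<Pi>\<^sub>E i\<in>?J. (UNIV :: 'a set))"
  proof
    fix B assume "B \<in> central_partition X m"
    then obtain x where x: "x \<in> X" "B = cylC X x m" by (auto simp: central_partition_def)
    have "B = (\<lambda>r. {z\<in>X. \<forall>i. \<bar>i\<bar> \<le> int m \<longrightarrow> z i = r i}) (restrict x ?J)"
      using x by (auto simp: cylC_def restrict_def)
    moreover have "restrict x ?J \<in> (\<Pi>\<^sub>E i\<in>?J. (UNIV :: 'a set))" by simp
    ultimately show "B \<in> (\<lambda>r. {z\<in>X. \<forall>i. \<bar>i\<bar> \<le> int m \<longrightarrow> z i = r i}) ` (\<Pi>\<^sub>E i\<in>?J. (UNIV :: 'a set))"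
      by blast
  qed
  moreover have "finite (\<Pi>\<^sub>E i\<in>?J. (UNIV :: 'a set))" by (intro finite_PiE) auto
  ultimately show ?thesis using finite_subset by blast
qed

lemma dX_le1: "dX x y \<le> 1"
  by (auto simp: dX_def power_le_one)

lemma dX_le_diamX: assumes "p \<in> B" "q \<in> B" shows "dX p q \<le> diamX B"
proof -
  have "bdd_above ((\<lambda>p. dX (fst p) (snd p)) ` (B \<times> B))"
    using dX_le1 by (intro bdd_aboveI2[where M=1]) auto
  then have "dX (fst (p,q)) (snd (p,q)) \<le> (SUP p\<in>B \<times> B. dX (fst p) (snd p))"
    using assms by (intro cSUP_upper) auto
  then show ?thesis using assms by (auto simp: diamX_def)
qed

definition atom :: "(int \<Rightarrow> 'a) set \<Rightarrow> nat \<Rightarrow> (nat \<Rightarrow> (int \<Rightarrow> 'a) set) \<Rightarrow> (int \<Rightarrow> 'a) set" where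
  "atom X n B = {x\<in>X. \<forall>k<n. (shift ^^ k) x \<in> B k}"

lemma join_partition_atom: "join_partition X \<beta> n = {C. C \<noteq> {} \<and> (\<exists>B. (\<forall>k<n. B k \<in> \<beta>) \<and> C = atom X n B)}"
  by (simp add: join_partition_def atom_def)

lemma join_finite:
  assumes "finite \<beta>" shows "finite (join_partition X \<beta> n)"
proof -
  have sub: "join_partition X \<beta> n \<subseteq> atom X n ` (\<Pi>\<^sub>E k\<in>{..<n}. \<beta>)"
  proof
    fix C assume "C \<in> join_partition X \<beta> n"
    then have "\<exists>B. (\<forall>k<n. B k \<in> \<beta>) \<and> C = atom X n B" by (simp add: join_partition_atom)
    then obtain B where B1: "\<forall>k<n. B k \<in> \<beta>" and B2: "C = atom X n B" by (elim exE conjE)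
    have e: "atom X n B = atom X n (restrict B {..<n})" unfolding atom_def by simp
    have r: "restrict B {..<n} \<in> (\<Pi>\<^sub>E k\<in>{..<n}. \<beta>)" using B1 by simp
    show "C \<in> atom X n ` (\<Pi>\<^sub>E k\<in>{..<n}. \<beta>)" unfolding B2 e by (rule imageI[OF r])
  qed
  have fin: "finite (\<Pi>\<^sub>E k\<in>{..<n}. \<beta>)" using assms by (intro finite_PiE) simp_all
  show ?thesis by (rule finite_subset[OF sub finite_imageI[OF fin]])
qed

lemma central_partition_eq:
  assumes "B \<in> central_partition X m" "B' \<in> central_partition X m" "z \<in> B" "z \<in> B'"
  shows "B = B'"
proof -
  obtain c where c: "B = cylC X c m" using assms(1) by (auto simp: central_partition_def)
  obtain c' where c': "B' = cylC X c' m" using assms(2) by (auto simp: central_partition_def)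
  have "B = cylC X z m" using c assms(3) cylC_eq[of z X c m] by simp
  also have "\<dots> = B'" using c' assms(4) cylC_eq[of z X c' m] by simp
  finally show ?thesis .
qed

lemma join_disjoint:
  assumes "\<And>B B' z. B \<in> \<beta> \<Longrightarrow> B' \<in> \<beta> \<Longrightarrow> z \<in> B \<Longrightarrow> z \<in> B' \<Longrightarrow> B = B'"
  shows "disjoint (join_partition X \<beta> n)"
proof (rule disjointI)
  fix C C' assume C: "C \<in> join_partition X \<beta> n" and C': "C' \<in> join_partition X \<beta> n" and ne: "C \<noteq> C'"
  obtain B where B: "\<forall>k<n. B k \<in> \<beta>" "C = atom X n B" using C unfolding join_partition_atom by blast
  obtain B' where B': "\<forall>k<n. B' k \<in> \<beta>" "C' = atom X n B'" using C' unfolding join_partition_atom by blast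
  show "C \<inter> C' = {}"
  proof (rule ccontr)
    assume "C \<inter> C' \<noteq> {}"
    then obtain z where z: "z \<in> atom X n B" "z \<in> atom X n B'" using B B' by blast
    have "\<forall>k<n. B k = B' k"
    proof (intro allI impI)
      fix k assume "k < n"
      then have "(shift ^^ k) z \<in> B k" "(shift ^^ k) z \<in> B' k" "B k \<in> \<beta>" "B' k \<in> \<beta>"
        using z B B' unfolding atom_def by auto
      then show "B k = B' k" using assms by blast
    qed
    then have "atom X n B = atom X n B'" by (auto simp: atom_def)
    then show False using ne B B' by simp
  qed
qed

lemma join_cover:
  assumes "is_SFT X"
  shows "\<Union>(join_partition X (central_partition X m) n) = X"
proof
  show "\<Union>(join_partition X (central_partition X m) n) \<subseteq> X"
    by (auto simp: join_partition_atom atom_def)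
  show "X \<subseteq> \<Union>(join_partition X (central_partition X m) n)"
  proof
    fix x assume x: "x \<in> X"
    define B where "B k = cylC X ((shift ^^ k) x) m" for k
    have "\<forall>k<n. B k \<in> central_partition X m"
      using SFT_shift_pow[OF assms x] by (auto simp: B_def central_partition_def)
    moreover have "x \<in> atom X n B"
      using x SFT_shift_pow[OF assms x] cylC_self by (auto simp: atom_def B_def)
    ultimately show "x \<in> \<Union>(join_partition X (central_partition X m) n)"
      unfolding join_partition_atom by blast
  qed
qed

lemma comp_set_meas:
  "{x. x j = v} \<in> sets (PiM UNIV (\<lambda>_::int. count_space (UNIV :: 'a set)))"
proof -
  have "(\<lambda>x. x j) -` {v} \<inter> space (PiM UNIV (\<lambda>_::int. count_space (UNIV :: 'a set)))
      \<in> sets (PiM UNIV (\<lambda>_::int. count_space (UNIV :: 'a set)))"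
    by (rule measurable_sets[OF measurable_component_singleton]) auto
  moreover have "space (PiM UNIV (\<lambda>_::int. count_space (UNIV :: 'a set))) = UNIV"
    by (simp add: space_PiM)
  ultimately show ?thesis by (simp add: vimage_def)
qed

lemma atom_meas:
  assumes "is_SFT X" "\<forall>k<n. B k \<in> central_partition X m"
  shows "atom X n B \<in> sets (MX X)"
proof -
  let ?P = "PiM UNIV (\<lambda>_::int. count_space (UNIV :: 'a set))"
  have "\<forall>k. \<exists>c. k < n \<longrightarrow> c \<in> X \<and> B k = cylC X c m"
    using assms(2) unfolding central_partition_def by blast
  from choice[OF this] obtain c where c: "\<forall>k<n. c k \<in> X \<and> B k = cylC X (c k) m"
    by blast
  define S where "S = (\<Inter>k\<in>{..<n}. \<Inter>i. {x. \<bar>i\<bar> \<le> int m \<longrightarrow> x (i + int k) = c k i})"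
  have U: "UNIV \<in> sets ?P"
    using sets.top[of ?P] by (simp add: space_PiM)
  have one: "{x. \<bar>i\<bar> \<le> int m \<longrightarrow> x (i + int k) = c k i} \<in> sets ?P" for i k
  proof (cases "\<bar>i\<bar> \<le> int m")
    case True then show ?thesis using comp_set_meas[of "i + int k" "c k i"] by simp
  next
    case False then show ?thesis using U by simp
  qed
  have S: "S \<in> sets ?P"
  proof -
    have inner: "(\<Inter>i. {x. \<bar>i\<bar> \<le> int m \<longrightarrow> x (i + int k) = c k i}) \<in> sets ?P" for k
      by (rule sets.countable_INT''[OF U countableI_type one])
    show ?thesis unfolding S_def
      by (rule sets.countable_INT''[OF U countable_finite[OF finite_lessThan] inner])
  qed
  have "atom X n B = X \<inter> S"
  proof (intro set_eqI iffI)
    fix x assume x: "x \<in> atom X n B"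
    then have xX: "x \<in> X" and xk: "\<forall>k<n. (shift ^^ k) x \<in> cylC X (c k) m"
      using c by (auto simp: atom_def)
    have "x \<in> S" unfolding S_def
    proof (intro INT_I CollectI impI)
      fix k i assume "k \<in> {..<n}" "\<bar>i\<bar> \<le> int m"
      then show "x (i + int k) = c k i" using xk by (auto simp: cylC_def shift_pow)
    qed
    then show "x \<in> X \<inter> S" using xX by simp
  next
    fix x assume x: "x \<in> X \<inter> S"
    have "(shift ^^ k) x \<in> B k" if "k < n" for k
    proof -
      have "(shift ^^ k) x \<in> X" using SFT_shift_pow[OF assms(1)] x by simp
      moreover have "\<forall>i. \<bar>i\<bar> \<le> int m \<longrightarrow> (shift ^^ k) x i = c k i"
        using x that by (auto simp: S_def shift_pow)
      ultimately show ?thesis using c that by (simp add: cylC_def)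
    qed
    then show "x \<in> atom X n B" using x by (simp add: atom_def)
  qed
  moreover have "X \<inter> S \<in> sets (MX X)"
    using S unfolding MX_def sets_restrict_space by blast
  ultimately show ?thesis by simp
qed

lemma space_M: "space (MT Th \<Otimes>\<^sub>M MX X) = Th \<times> X"
  by (simp add: space_pair_measure MT_def MX_def space_restrict_space space_PiM)

theorem lemma7p2:
  fixes X :: "(int \<Rightarrow> 'a::finite) set"
    and Th :: "'t::metric_space set"
    and T :: "'y::polish_space \<Rightarrow> 'y"
    and \<nu> :: "'y measure"
    and f :: "'t \<Rightarrow> (int \<Rightarrow> 'a) \<Rightarrow> real"
    and \<mu> :: "'t \<Rightarrow> (int \<Rightarrow> 'a) measure"
    and \<pi>0 :: "'t measure"
    and loss :: "'t \<Rightarrow> (int \<Rightarrow> 'a) \<Rightarrow> 'y \<Rightarrow> real"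
    and lstar :: "'y \<Rightarrow> real"
    and \<rho> :: "real \<Rightarrow> 'y \<Rightarrow> real"
    and \<delta> :: real
    and \<alpha> :: "'t set set"
    and \<beta> :: "(int \<Rightarrow> 'a) set set"
    and \<eta> :: "('t \<times> (int \<Rightarrow> 'a)) measure"
    and y :: 'y
    and n :: nat
  assumes Y_sys: "prob_space \<nu>" "sets \<nu> = sets borel" "T \<in> borel_measurable borel"
      "ergodic_invariant \<nu> T"
    and X_sft: "mixing_SFT X"
    and Th_cpt: "compact Th" "Th \<noteq> {}"
    and f_reg: "regular_family Th X f"
    and mu_gibbs: "\<forall>\<theta>\<in>Th. gibbs_measure X (f \<theta>) (\<mu> \<theta>)"
    and l_cont: "\<forall>\<theta>\<in>Th. \<forall>x\<in>X. \<forall>y. \<forall>\<epsilon>>0. \<exists>d>0. \<forall>\<theta>'\<in>Th. \<forall>x'\<in>X. \<forall>y'.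
         dist \<theta> \<theta>' < d \<and> dX x x' < d \<and> dist y y' < d \<longrightarrow> \<bar>loss \<theta>' x' y' - loss \<theta> x y\<bar> < \<epsilon>"
    and l_bound: "\<forall>y. \<forall>\<theta>\<in>Th. \<forall>x\<in>X. \<bar>loss \<theta> x y\<bar> \<le> lstar y"
    and lstar_int: "integrable \<nu> lstar"
    and rho_meas: "\<forall>d>0. \<rho> d \<in> borel_measurable borel \<and> (\<forall>y. \<rho> d y > 0)"
    and rho_bound: "\<forall>d>0. \<forall>\<theta>\<in>Th. \<forall>\<theta>'\<in>Th. \<forall>x\<in>X. \<forall>x'\<in>X. \<forall>y.
         max (dist \<theta> \<theta>') (dX x x') \<le> d \<longrightarrow> \<bar>loss \<theta> x y - loss \<theta>' x' y\<bar> \<le> \<rho> d y"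
    and rho_lim: "((\<lambda>d. \<integral>\<^sup>+ y. ennreal (\<rho> d y) \<partial>\<nu>) \<longlongrightarrow> 0) (at_right 0)"
    and prior: "prob_space \<pi>0" "sets \<pi>0 = sets (MT Th)"
      "\<forall>U. open U \<and> U \<inter> Th \<noteq> {} \<longrightarrow> emeasure \<pi>0 (U \<inter> Th) > 0"
    and delta_pos: "\<delta> > 0"
    and alpha_part: "finite_measurable_partition (MT Th) \<alpha>"
    and alpha_diam: "\<forall>A\<in>\<alpha>. diameter A < \<delta>"
    and beta_part: "is_central_word_partition X \<beta>"
    and beta_diam: "\<forall>B\<in>\<beta>. diamX B < \<delta>"
    and eta_prob: "prob_space \<eta>" "sets \<eta> = sets (MT Th \<Otimes>\<^sub>M MX X)"
    and n_pos: "n \<ge> 1"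
  shows "ereal (\<integral> p. gn loss T n (fst p) (snd p) y \<partial>\<eta>)
           - KL \<eta> (P0 Th X \<pi>0 \<mu>) (prod_partition \<alpha> (join_partition X \<beta> n))
         \<le> ereal (ln (\<integral> p. exp (gn loss T n (fst p) (snd p) y) \<partial>(P0 Th X \<pi>0 \<mu>))
                  + (\<Sum>k<n. \<rho> \<delta> ((T ^^ k) y)))"
proof -
  obtain m where m: "\<beta> = central_partition X m"
    using beta_part unfolding is_central_word_partition_def by blast
  have sft: "is_SFT X" using X_sft by (simp add: mixing_SFT_def)
  define \<beta>n where "\<beta>n = join_partition X \<beta> n"
  define \<xi> where "\<xi> = prod_partition \<alpha> \<beta>n"
  define \<gamma> where "\<gamma> = P0 Th X \<pi>0 \<mu>"
  define h where "h p = gn loss T n (fst p) (snd p) y" for p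
  define R where "R = (\<Sum>k<n. \<rho> \<delta> ((T ^^ k) y))"
  define Bd where "Bd = (\<Sum>k<n. lstar ((T ^^ k) y))"
  have sp\<eta>: "space \<eta> = Th \<times> X"
    using sets_eq_imp_space_eq[OF eta_prob(2)] space_M by simp
  have sg: "sets \<gamma> = sets \<eta>" using eta_prob(2) P0_sets(1) by (simp add: \<gamma>_def)
  have g1: "emeasure \<gamma> (space \<gamma>) \<le> 1"
    unfolding \<gamma>_def
    by (rule P0_le1[OF prior(1) prior(2)]) (use mu_gibbs in \<open>simp add: gibbs_measure_def\<close>)
  have afin: "finite \<alpha>" and adis: "disjoint \<alpha>" and acov: "\<Union>\<alpha> = Th" and ameas: "\<alpha> \<subseteq> sets (MT Th)"
    using alpha_part by (auto simp: finite_measurable_partition_def MT_def space_restrict_space)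
  have bfin: "finite \<beta>n" unfolding \<beta>n_def m
    by (rule join_finite[OF central_partition_finite])
  have bdis: "disjoint \<beta>n" unfolding \<beta>n_def m
    by (rule join_disjoint) (rule central_partition_eq)
  have bcov: "\<Union>\<beta>n = X" unfolding \<beta>n_def m by (rule join_cover[OF sft])
  have bmeas: "\<beta>n \<subseteq> sets (MX X)"
  proof
    fix D assume "D \<in> \<beta>n"
    then obtain Bf where "\<forall>k<n. Bf k \<in> central_partition X m" "D = atom X n Bf"
      unfolding \<beta>n_def m join_partition_atom by blast
    then show "D \<in> sets (MX X)" using atom_meas[OF sft] by simp
  qed
  have xfin: "finite \<xi>"
  proof -
    have "\<xi> \<subseteq> (\<lambda>(A, D). A \<times> D) ` (\<alpha> \<times> \<beta>n)"
      unfolding \<xi>_def prod_partition_def by auto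
    moreover have "finite ((\<lambda>(A, D). A \<times> D) ` (\<alpha> \<times> \<beta>n))" using afin bfin by simp
    ultimately show ?thesis by (rule finite_subset)
  qed
  have xdis: "disjoint \<xi>"
  proof (rule disjointI)
    fix C C' assume "C \<in> \<xi>" "C' \<in> \<xi>" "C \<noteq> C'"
    then obtain A D A' D' where AD: "A \<in> \<alpha>" "D \<in> \<beta>n" "C = A \<times> D" "A' \<in> \<alpha>" "D' \<in> \<beta>n" "C' = A' \<times> D'"
      unfolding \<xi>_def prod_partition_def by blast
    show "C \<inter> C' = {}"
    proof (cases "A = A'")
      case True
      then have "D \<noteq> D'" using AD \<open>C \<noteq> C'\<close> by auto
      then have "D \<inter> D' = {}" using bdis AD by (auto simp: disjoint_def)
      then show ?thesis using AD by auto
    next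
      case False
      then have "A \<inter> A' = {}" using adis AD by (auto simp: disjoint_def)
      then show ?thesis using AD by auto
    qed
  qed
  have xcov: "\<Union>\<xi> = space \<eta>"
  proof
    show "\<Union>\<xi> \<subseteq> space \<eta>" unfolding sp\<eta> \<xi>_def prod_partition_def using acov bcov by blast
    show "space \<eta> \<subseteq> \<Union>\<xi>"
    proof
      fix p assume "p \<in> space \<eta>"
      then have "fst p \<in> Th" "snd p \<in> X" using sp\<eta> by (auto simp: mem_Times_iff)
      then obtain A D where "A \<in> \<alpha>" "D \<in> \<beta>n" "fst p \<in> A" "snd p \<in> D"
        using acov bcov by blast
      then have "p \<in> A \<times> D" "A \<times> D \<in> \<xi>" unfolding \<xi>_def prod_partition_def by (auto simp: mem_Times_iff)
      then show "p \<in> \<Union>\<xi>" by blast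
    qed
  qed
  have xmeas: "\<xi> \<subseteq> sets \<eta>"
  proof
    fix C assume "C \<in> \<xi>"
    then obtain A D where "A \<in> \<alpha>" "D \<in> \<beta>n" "C = A \<times> D"
      unfolding \<xi>_def prod_partition_def by blast
    then show "C \<in> sets \<eta>" using ameas bmeas eta_prob(2) by (auto intro!: pair_measureI)
  qed
  have bTh: "bounded Th" using Th_cpt(1) by (rule compact_imp_bounded)
  have osc: "\<forall>C\<in>\<xi>. \<forall>p\<in>C. \<forall>q\<in>C. h p \<le> h q + R"
  proof (intro ballI)
    fix C p q assume C: "C \<in> \<xi>" and p: "p \<in> C" and q: "q \<in> C"
    then obtain A D where AD: "A \<in> \<alpha>" "D \<in> \<beta>n" "C = A \<times> D"
      unfolding \<xi>_def prod_partition_def by blast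
    obtain Bf where Bf: "\<forall>k<n. Bf k \<in> central_partition X m" "D = atom X n Bf"
      using AD(2) unfolding \<beta>n_def m join_partition_atom by blast
    obtain \<theta> x where px: "p = (\<theta>, x)" by (cases p)
    obtain \<theta>' x' where qx: "q = (\<theta>', x')" by (cases q)
    have th: "\<theta> \<in> A" "\<theta>' \<in> A" and xs: "x \<in> D" "x' \<in> D" using p q px qx AD by auto
    have ATh: "A \<subseteq> Th" using AD(1) acov by blast
    have "diameter A < \<delta>" using alpha_diam AD(1) by blast
    then have dth: "dist \<theta> \<theta>' \<le> \<delta>"
      using diameter_bounded_bound[OF bounded_subset[OF bTh ATh] th] by linarith
    have thTh: "\<theta> \<in> Th" "\<theta>' \<in> Th" using th ATh by auto
    have each: "loss \<theta>' ((shift ^^ k) x') ((T ^^ k) y) - loss \<theta> ((shift ^^ k) x) ((T ^^ k) y)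
        \<le> \<rho> \<delta> ((T ^^ k) y)" if kn: "k < n" for k
    proof -
      have in1: "(shift ^^ k) x \<in> Bf k" "(shift ^^ k) x' \<in> Bf k"
        using xs Bf(2) kn by (auto simp: atom_def)
      obtain c where "Bf k = cylC X c m" using Bf(1) kn unfolding central_partition_def by blast
      then have BX: "Bf k \<subseteq> X" using cylC_sub by simp
      have sX: "(shift ^^ k) x \<in> X" "(shift ^^ k) x' \<in> X" using BX in1 by auto
      have "dX ((shift ^^ k) x) ((shift ^^ k) x') \<le> diamX (Bf k)" by (rule dX_le_diamX[OF in1])
      also have "\<dots> < \<delta>" using beta_diam Bf(1) kn m by simp
      finally have "max (dist \<theta> \<theta>') (dX ((shift ^^ k) x) ((shift ^^ k) x')) \<le> \<delta>" using dth by simp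
      then have "\<bar>loss \<theta> ((shift ^^ k) x) ((T ^^ k) y) - loss \<theta>' ((shift ^^ k) x') ((T ^^ k) y)\<bar> \<le> \<rho> \<delta> ((T ^^ k) y)"
        by (rule rho_bound[rule_format, OF delta_pos thTh(1) thTh(2) sX(1) sX(2)])
      then show ?thesis by linarith
    qed
    have "(\<Sum>k<n. loss \<theta>' ((shift ^^ k) x') ((T ^^ k) y)) - (\<Sum>k<n. loss \<theta> ((shift ^^ k) x) ((T ^^ k) y)) \<le> R"
      unfolding R_def sum_subtractf[symmetric] by (rule sum_mono) (use each in simp)
    then show "h p \<le> h q + R" by (simp add: h_def gn_def px qx)
  qed
  have R0: "R \<ge> 0" unfolding R_def using rho_meas delta_pos by (intro sum_nonneg) (simp add: less_imp_le)
  have bnd: "\<forall>p\<in>space \<eta>. \<bar>h p\<bar> \<le> Bd"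
  proof
    fix p assume "p \<in> space \<eta>"
    then obtain \<theta> x where px: "p = (\<theta>, x)" "\<theta> \<in> Th" "x \<in> X" using sp\<eta> by (cases p) auto
    have "\<bar>h p\<bar> = \<bar>\<Sum>k<n. loss \<theta> ((shift ^^ k) x) ((T ^^ k) y)\<bar>" by (simp add: h_def gn_def px)
    also have "\<dots> \<le> (\<Sum>k<n. \<bar>loss \<theta> ((shift ^^ k) x) ((T ^^ k) y)\<bar>)" by (rule sum_abs)
    also have "\<dots> \<le> Bd" unfolding Bd_def
      using l_bound px SFT_shift_pow[OF sft] by (intro sum_mono) (simp add: l_bound[rule_format, OF px(2)] SFT_shift_pow[OF sft px(3)])
    finally show "\<bar>h p\<bar> \<le> Bd" .
  qed
  have "ereal (\<integral>p. h p \<partial>\<eta>) - KL \<eta> \<gamma> \<xi> \<le> ereal (ln (\<integral>p. exp (h p) \<partial>\<gamma>) + R)"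
    by (rule main_abstract[OF eta_prob(1) sg g1 xfin xdis xcov xmeas osc R0 bnd])
  then show ?thesis by (simp add: h_def \<xi>_def \<beta>n_def \<gamma>_def R_def)
qed

end
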